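(* The radical $\sqrt{\nabla}$ of a finite irreducible undirected graph $\nabla$ (loops allowed) is itself an irreducible graph.
   Context: $\nabla(x)$ is the set of vertices adjacent to $x$, $\nabla(X)=\bigcap_{x\in X}\nabla(x)$ (with $\nabla(\emptyset)=V$), and $\mathbb{L}(\nabla)=\{X\subseteq V:\nabla(\nabla(X))=X\}$ ordered by inclusion. A graph is irreducible if distinct vertices have distinct neighborhoods. An element $a$ of a lattice is (completely) meet-irreducible if $a=\bigwedge A$ for a subset $A$ implies $a\in A$; a vertex $x$ is essential if $\nabla(x)$ is meet-irreducible in $\mathbb{L}(\nabla)$. The radical $\sqrt{\nabla}$ is the induced subgraph of $\nabla$ on the set of its essential vertices (adjacency inherited from $\nabla$). *)

theory Defs
  imports Main
begin

text \<open>A graph is given by a vertex set V and an adjacency relation adj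
  (only its restriction to V matters). Undirected: adj symmetric on V; loops allowed.\<close>

definition undirected_graph :: "'a set \<Rightarrow> ('a \<Rightarrow> 'a \<Rightarrow> bool) \<Rightarrow> bool" where
  "undirected_graph V adj \<longleftrightarrow> (\<forall>x\<in>V. \<forall>y\<in>V. adj x y \<longleftrightarrow> adj y x)"

definition nbhd :: "'a set \<Rightarrow> ('a \<Rightarrow> 'a \<Rightarrow> bool) \<Rightarrow> 'a \<Rightarrow> 'a set" where
  "nbhd V adj x = {y \<in> V. adj x y}"

definition nablaS :: "'a set \<Rightarrow> ('a \<Rightarrow> 'a \<Rightarrow> bool) \<Rightarrow> 'a set \<Rightarrow> 'a set" where
  "nablaS V adj X = {y \<in> V. \<forall>x\<in>X. adj x y}"

definition closed_sets :: "'a set \<Rightarrow> ('a \<Rightarrow> 'a \<Rightarrow> bool) \<Rightarrow> 'a set set" where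
  "closed_sets V adj = {X. X \<subseteq> V \<and> nablaS V adj (nablaS V adj X) = X}"

definition irreducible_graph :: "'a set \<Rightarrow> ('a \<Rightarrow> 'a \<Rightarrow> bool) \<Rightarrow> bool" where
  "irreducible_graph V adj \<longleftrightarrow>
     (\<forall>x\<in>V. \<forall>y\<in>V. x \<noteq> y \<longrightarrow> nbhd V adj x \<noteq> nbhd V adj y)"

definition is_meet_in :: "'b set set \<Rightarrow> 'b set set \<Rightarrow> 'b set \<Rightarrow> bool" where
  "is_meet_in L A a \<longleftrightarrow> a \<in> L \<and> (\<forall>b\<in>A. a \<subseteq> b)
     \<and> (\<forall>c\<in>L. (\<forall>b\<in>A. c \<subseteq> b) \<longrightarrow> c \<subseteq> a)"

text \<open>Completely meet-irreducible element of the lattice L.\<close>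
definition meet_irreducible_in :: "'b set set \<Rightarrow> 'b set \<Rightarrow> bool" where
  "meet_irreducible_in L a \<longleftrightarrow> a \<in> L \<and>
     (\<forall>A. A \<subseteq> L \<longrightarrow> is_meet_in L A a \<longrightarrow> a \<in> A)"

definition essential :: "'a set \<Rightarrow> ('a \<Rightarrow> 'a \<Rightarrow> bool) \<Rightarrow> 'a \<Rightarrow> bool" where
  "essential V adj x \<longleftrightarrow> x \<in> V \<and> meet_irreducible_in (closed_sets V adj) (nbhd V adj x)"

text \<open>Radical: induced subgraph on the essential vertices (vertex set; adjacency inherited).\<close>
definition radical_vertices :: "'a set \<Rightarrow> ('a \<Rightarrow> 'a \<Rightarrow> bool) \<Rightarrow> 'a set" where
  "radical_vertices V adj = {x \<in> V. essential V adj x}"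

end

theory Submission
  imports Defs
begin

lemma ext_cl:
  assumes "undirected_graph V adj" "S \<subseteq> V"
  shows "S \<subseteq> nablaS V adj (nablaS V adj S)"
  using assms unfolding nablaS_def undirected_graph_def by blast

lemma anti: "S \<subseteq> T \<Longrightarrow> nablaS V adj T \<subseteq> nablaS V adj S"
  unfolding nablaS_def by blast

lemma nab_sub: "nablaS V adj S \<subseteq> V" unfolding nablaS_def by blast

lemma triple:
  assumes "undirected_graph V adj" "T \<subseteq> V"
  shows "nablaS V adj (nablaS V adj (nablaS V adj T)) = nablaS V adj T"
proof
  show "nablaS V adj (nablaS V adj (nablaS V adj T)) \<subseteq> nablaS V adj T"
    by (rule anti[OF ext_cl[OF assms]])
  show "nablaS V adj T \<subseteq> nablaS V adj (nablaS V adj (nablaS V adj T))"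
    by (rule ext_cl[OF assms(1) nab_sub])
qed

lemma cl_closed:
  assumes "undirected_graph V adj" "T \<subseteq> V"
  shows "nablaS V adj (nablaS V adj T) \<in> closed_sets V adj"
  unfolding closed_sets_def using triple[OF assms(1) nab_sub, of adj T] nab_sub[of V adj]
  by simp

lemma nbhd_eq: "nbhd V adj x = nablaS V adj {x}"
  unfolding nbhd_def nablaS_def by auto

lemma nbhd_closed:
  assumes "undirected_graph V adj" "x \<in> V"
  shows "nbhd V adj x \<in> closed_sets V adj"
  unfolding closed_sets_def nbhd_eq using triple[OF assms(1), of "{x}"] assms nab_sub[of V adj]
  by auto

lemma mi_is_nbhd:
  assumes u: "undirected_graph V adj" and M: "meet_irreducible_in (closed_sets V adj) M"
  shows "\<exists>w\<in>V. M = nbhd V adj w"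
proof -
  have Mc: "M \<in> closed_sets V adj" using M unfolding meet_irreducible_in_def by blast
  hence MV: "M \<subseteq> V" and Meq: "nablaS V adj (nablaS V adj M) = M"
    unfolding closed_sets_def by auto
  define A where "A = nbhd V adj ` nablaS V adj M"
  have AL: "A \<subseteq> closed_sets V adj" unfolding A_def using nbhd_closed[OF u] nab_sub[of V adj M] by blast
  have "is_meet_in (closed_sets V adj) A M"
    unfolding is_meet_in_def
  proof (intro conjI ballI impI)
    show "M \<in> closed_sets V adj" by (rule Mc)
    fix b assume "b \<in> A"
    then obtain w where w: "w \<in> nablaS V adj M" "b = nbhd V adj w" unfolding A_def by blast
    show "M \<subseteq> b"
    proof
      fix m assume mM: "m \<in> M"
      have "w \<in> V" "adj m w" using w(1) mM unfolding nablaS_def by auto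
      moreover have "m \<in> V" using mM MV by blast
      ultimately have "adj w m" using u unfolding undirected_graph_def by blast
      thus "m \<in> b" using w(2) \<open>m \<in> V\<close> unfolding nbhd_def by blast
    qed
  next
    fix c assume c: "c \<in> closed_sets V adj" "\<forall>b\<in>A. c \<subseteq> b"
    have "c \<subseteq> nablaS V adj (nablaS V adj M)"
    proof
      fix t assume tc: "t \<in> c"
      have tV: "t \<in> V" using tc c(1) unfolding closed_sets_def by blast
      have "\<forall>w\<in>nablaS V adj M. adj w t"
      proof
        fix w assume "w \<in> nablaS V adj M"
        hence "nbhd V adj w \<in> A" unfolding A_def by blast
        hence "t \<in> nbhd V adj w" using c(2) tc by blast
        thus "adj w t" unfolding nbhd_def by blast
      qed
      thus "t \<in> nablaS V adj (nablaS V adj M)" using tV unfolding nablaS_def by blast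
    qed
    thus "c \<subseteq> M" using Meq by simp
  qed
  hence "M \<in> A" using M AL unfolding meet_irreducible_in_def by blast
  thus ?thesis unfolding A_def using nab_sub[of V adj M] by blast
qed

lemma key:
  assumes fin: "finite V" and u: "undirected_graph V adj"
    and xV: "x \<in> V" and yV: "y \<in> V" and zV: "z \<in> V"
    and axz: "adj x z" and nyz: "\<not> adj y z"
  shows "\<exists>w\<in>radical_vertices V adj. adj x w \<and> \<not> adj y w"
proof -
  define C where "C = {X \<in> closed_sets V adj. nbhd V adj z \<subseteq> X \<and> y \<notin> X}"
  have "nbhd V adj z \<in> C" unfolding C_def using nbhd_closed[OF u zV] nyz u zV yV
    unfolding nbhd_def undirected_graph_def by auto
  moreover have "finite C" unfolding C_def closed_sets_def
    by (rule finite_subset[of _ "Pow V"]) (use fin in auto)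
  ultimately obtain M where MC: "M \<in> C" and mx: "\<forall>b\<in>C. M \<subseteq> b \<longrightarrow> M = b"
    using finite_has_maximal by (metis empty_iff)
  have Mc: "M \<in> closed_sets V adj" and zM: "nbhd V adj z \<subseteq> M" and yM: "y \<notin> M"
    using MC unfolding C_def by auto
  hence MV: "M \<subseteq> V" unfolding closed_sets_def by auto
  have "meet_irreducible_in (closed_sets V adj) M"
    unfolding meet_irreducible_in_def
  proof (intro conjI allI impI)
    show "M \<in> closed_sets V adj" by (rule Mc)
    fix A assume AL: "A \<subseteq> closed_sets V adj" and me: "is_meet_in (closed_sets V adj) A M"
    show "M \<in> A"
    proof (rule ccontr)
      assume nA: "M \<notin> A"
      define c where "c = nablaS V adj (nablaS V adj (insert y M))"
      have iV: "insert y M \<subseteq> V" using MV yV by auto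
      have cc: "c \<in> closed_sets V adj" unfolding c_def by (rule cl_closed[OF u iV])
      have "\<forall>b\<in>A. c \<subseteq> b"
      proof
        fix b assume bA: "b \<in> A"
        have bc: "b \<in> closed_sets V adj" using bA AL by blast
        have Mb: "M \<subseteq> b" using me bA unfolding is_meet_in_def by blast
        have "y \<in> b"
        proof (rule ccontr)
          assume "y \<notin> b"
          hence "b \<in> C" unfolding C_def using bc Mb zM by auto
          thus False using mx Mb nA bA by blast
        qed
        hence "insert y M \<subseteq> b" using Mb by blast
        hence "c \<subseteq> nablaS V adj (nablaS V adj b)" unfolding c_def by (intro anti)
        thus "c \<subseteq> b" using bc unfolding closed_sets_def by auto
      qed
      hence "c \<subseteq> M" using me cc unfolding is_meet_in_def by blast
      moreover have "y \<in> c" using ext_cl[OF u iV] unfolding c_def by blast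
      ultimately show False using yM by blast
    qed
  qed
  moreover then obtain w where wV: "w \<in> V" and Mw: "M = nbhd V adj w"
    using mi_is_nbhd[OF u] by blast
  ultimately have "w \<in> radical_vertices V adj"
    unfolding radical_vertices_def essential_def by auto
  moreover have "x \<in> M" using zM axz xV zV u unfolding nbhd_def undirected_graph_def by auto
  ultimately show ?thesis using Mw yM wV xV yV u unfolding nbhd_def undirected_graph_def
    by auto
qed

theorem mainTheorem16:
  fixes V :: "'a set" and adj :: "'a \<Rightarrow> 'a \<Rightarrow> bool"
  assumes "finite V"
    and "undirected_graph V adj"
    and "irreducible_graph V adj"
  shows "irreducible_graph (radical_vertices V adj) adj"
  unfolding irreducible_graph_def
proof (intro ballI impI)
  fix x y assume xR: "x \<in> radical_vertices V adj" and yR: "y \<in> radical_vertices V adj"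
    and xy: "x \<noteq> y"
  have xV: "x \<in> V" and yV: "y \<in> V" using xR yR unfolding radical_vertices_def by auto
  have "nbhd V adj x \<noteq> nbhd V adj y" using assms(3) xV yV xy unfolding irreducible_graph_def by blast
  then obtain z where zV: "z \<in> V" and d: "adj x z \<noteq> adj y z" unfolding nbhd_def by blast
  show "nbhd (radical_vertices V adj) adj x \<noteq> nbhd (radical_vertices V adj) adj y"
  proof (cases "adj x z")
    case True
    then obtain w where "w \<in> radical_vertices V adj" "adj x w" "\<not> adj y w"
      using key[OF assms(1,2) xV yV zV] d by blast
    thus ?thesis unfolding nbhd_def by blast
  next
    case False
    then obtain w where "w \<in> radical_vertices V adj" "adj y w" "\<not> adj x w"
      using key[OF assms(1,2) yV xV zV] d by blast
    thus ?thesis unfolding nbhd_def by blast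
  qed
qed

end
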